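(* Let $\Gamma$ be a set of axioms. Then $\mathsf{ICK}\oplus\Gamma$ is sound and complete with respect to the class of conditional Esakia spaces that validate $\Gamma$.
   Context: Formulas are generated by $\phi ::= p\mid\bot\mid\phi\wedge\phi\mid\phi\vee\phi\mid\phi\to\phi\mid\phi\mathrel{\Box\!\!\!\rightarrow}\phi$. $\mathsf{ICK}\oplus\Gamma$ is the smallest set of formulas containing intuitionistic propositional logic, $\Gamma$, $(p\mathrel{\Box\!\!\!\rightarrow}(q\wedge r))\leftrightarrow((p\mathrel{\Box\!\!\!\rightarrow} q)\wedge(p\mathrel{\Box\!\!\!\rightarrow} r))$ and $(p\mathrel{\Box\!\!\!\rightarrow}\top)\leftrightarrow\top$, closed under uniform substitution, modus ponens, and the congruence rules (from $p\leftrightarrow q$ infer $(p\mathrel{\Box\!\!\!\rightarrow} r)\leftrightarrow(q\mathrel{\Box\!\!\!\rightarrow} r)$ and $(r\mathrel{\Box\!\!\!\rightarrow} p)\leftrightarrow(r\mathrel{\Box\!\!\!\rightarrow} q)$). A conditional Esakia space is an Esakia space $(X,\leq,\tau)$ with relations $\{R_a\mid a \text{ a clopen upset}\}$ such that $\{x\mid R_a[x]\subseteq b\}$ is clopen for all clopen upsets $a,b$, $(\leq\circ R_a\circ\leq)=R_a$, and each $R_a[x]$ is closed. Formulas are interpreted with valuations assigning clopen upsets to proposition letters, intuitionistic clauses as in Kripke semantics, and $x\models\phi\mathrel{\Box\!\!\!\rightarrow}\psi$ iff every $y$ with $xR_{V(\phi)}y$ satisfies $\psi$; a space validates $\phi$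 if $\phi$ is true at every world under every clopen valuation. *)

theory Defs
  imports "HOL-Analysis.Abstract_Topology"
begin

datatype form =
    Var nat
  | Bot
  | Conj form form
  | Disj form form
  | Imp form form
  | Cond form form

definition Top :: form where "Top = Imp Bot Bot"

definition Iff :: "form \<Rightarrow> form \<Rightarrow> form" where
  "Iff a b = Conj (Imp a b) (Imp b a)"

primrec subst :: "(nat \<Rightarrow> form) \<Rightarrow> form \<Rightarrow> form" where
  "subst s (Var n) = s n"
| "subst s Bot = Bot"
| "subst s (Conj a b) = Conj (subst s a) (subst s b)"
| "subst s (Disj a b) = Disj (subst s a) (subst s b)"
| "subst s (Imp a b) = Imp (subst s a) (subst s b)"
| "subst s (Cond a b) = Cond (subst s a) (subst s b)"

inductive_set ICK :: "form set \<Rightarrow> form set" for \<Gamma> :: "form set" where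
  ipc1: "Imp a (Imp b a) \<in> ICK \<Gamma>"
| ipc2: "Imp (Imp a (Imp b c)) (Imp (Imp a b) (Imp a c)) \<in> ICK \<Gamma>"
| ipc3: "Imp (Conj a b) a \<in> ICK \<Gamma>"
| ipc4: "Imp (Conj a b) b \<in> ICK \<Gamma>"
| ipc5: "Imp a (Imp b (Conj a b)) \<in> ICK \<Gamma>"
| ipc6: "Imp a (Disj a b) \<in> ICK \<Gamma>"
| ipc7: "Imp b (Disj a b) \<in> ICK \<Gamma>"
| ipc8: "Imp (Imp a c) (Imp (Imp b c) (Imp (Disj a b) c)) \<in> ICK \<Gamma>"
| ipc9: "Imp Bot a \<in> ICK \<Gamma>"
| gamma: "a \<in> \<Gamma> \<Longrightarrow> a \<in> ICK \<Gamma>"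
| cmon: "Iff (Cond (Var 0) (Conj (Var 1) (Var 2)))
              (Conj (Cond (Var 0) (Var 1)) (Cond (Var 0) (Var 2))) \<in> ICK \<Gamma>"
| ctop: "Iff (Cond (Var 0) Top) Top \<in> ICK \<Gamma>"
| usubst: "a \<in> ICK \<Gamma> \<Longrightarrow> subst s a \<in> ICK \<Gamma>"
| mp: "a \<in> ICK \<Gamma> \<Longrightarrow> Imp a b \<in> ICK \<Gamma> \<Longrightarrow> b \<in> ICK \<Gamma>"
| congl: "Iff p q \<in> ICK \<Gamma> \<Longrightarrow> Iff (Cond p r) (Cond q r) \<in> ICK \<Gamma>"
| congr: "Iff p q \<in> ICK \<Gamma> \<Longrightarrow> Iff (Cond r p) (Cond r q) \<in> ICK \<Gamma>"

record 'a cspace =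
  topo :: "'a topology"
  ord  :: "'a \<Rightarrow> 'a \<Rightarrow> bool"
  rel  :: "'a set \<Rightarrow> 'a \<Rightarrow> 'a \<Rightarrow> bool"

abbreviation carrier :: "('a, 'b) cspace_scheme \<Rightarrow> 'a set" where
  "carrier S \<equiv> topspace (topo S)"

definition upset :: "('a, 'b) cspace_scheme \<Rightarrow> 'a set \<Rightarrow> bool" where
  "upset S U \<longleftrightarrow> U \<subseteq> carrier S \<and> (\<forall>x\<in>U. \<forall>y. ord S x y \<longrightarrow> y \<in> U)"

definition downclosure :: "('a, 'b) cspace_scheme \<Rightarrow> 'a set \<Rightarrow> 'a set" where
  "downclosure S U = {x \<in> carrier S. \<exists>y\<in>U. ord S x y}"

definition clopen :: "('a, 'b) cspace_scheme \<Rightarrow> 'a set \<Rightarrow> bool" where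
  "clopen S U \<longleftrightarrow> openin (topo S) U \<and> closedin (topo S) U"

definition clopen_upset :: "('a, 'b) cspace_scheme \<Rightarrow> 'a set \<Rightarrow> bool" where
  "clopen_upset S U \<longleftrightarrow> clopen S U \<and> upset S U"

definition esakia_space :: "('a, 'b) cspace_scheme \<Rightarrow> bool" where
  "esakia_space S \<longleftrightarrow>
     compact_space (topo S) \<and>
     (\<forall>x y. ord S x y \<longrightarrow> x \<in> carrier S \<and> y \<in> carrier S) \<and>
     (\<forall>x\<in>carrier S. ord S x x) \<and>
     (\<forall>x y z. ord S x y \<longrightarrow> ord S y z \<longrightarrow> ord S x z) \<and>
     (\<forall>x y. ord S x y \<longrightarrow> ord S y x \<longrightarrow> x = y) \<and>
     (\<forall>x\<in>carrier S. \<forall>y\<in>carrier S. \<not> ord S x y \<longrightarrow>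
        (\<exists>U. clopen_upset S U \<and> x \<in> U \<and> y \<notin> U)) \<and>
     (\<forall>U. clopen S U \<longrightarrow> clopen S (downclosure S U))"

definition cond_esakia_space :: "('a, 'b) cspace_scheme \<Rightarrow> bool" where
  "cond_esakia_space S \<longleftrightarrow>
     esakia_space S \<and>
     (\<forall>a. clopen_upset S a \<longrightarrow>
        (\<forall>x y. rel S a x y \<longrightarrow> x \<in> carrier S \<and> y \<in> carrier S) \<and>
        (\<forall>b. clopen_upset S b \<longrightarrow> clopen S {x \<in> carrier S. {y. rel S a x y} \<subseteq> b}) \<and>
        (\<forall>x y. rel S a x y \<longleftrightarrow> (\<exists>x' y'. ord S x x' \<and> rel S a x' y' \<and> ord S y' y)) \<and>
        (\<forall>x\<in>carrier S. closedin (topo S) {y. rel S a x y}))"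

primrec sem :: "('a, 'b) cspace_scheme \<Rightarrow> (nat \<Rightarrow> 'a set) \<Rightarrow> form \<Rightarrow> 'a set" where
  "sem S V (Var n) = V n"
| "sem S V Bot = {}"
| "sem S V (Conj a b) = sem S V a \<inter> sem S V b"
| "sem S V (Disj a b) = sem S V a \<union> sem S V b"
| "sem S V (Imp a b) = {x \<in> carrier S. \<forall>y. ord S x y \<longrightarrow> y \<in> sem S V a \<longrightarrow> y \<in> sem S V b}"
| "sem S V (Cond a b) = {x \<in> carrier S. \<forall>y. rel S (sem S V a) x y \<longrightarrow> y \<in> sem S V b}"

definition valid :: "('a, 'b) cspace_scheme \<Rightarrow> form \<Rightarrow> bool" where
  "valid S \<phi> \<longleftrightarrow> (\<forall>V. (\<forall>n. clopen_upset S (V n)) \<longrightarrow> (\<forall>x\<in>carrier S. x \<in> sem S V \<phi>))"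

end

theory Submission
  imports Defs "HOL-Analysis.Function_Topology"
begin


lemma ces_E:
  assumes "cond_esakia_space S"
  shows "\<forall>x y. ord S x y \<longrightarrow> x \<in> carrier S \<and> y \<in> carrier S"
    and "\<forall>x\<in>carrier S. ord S x x"
    and "\<forall>x y z. ord S x y \<longrightarrow> ord S y z \<longrightarrow> ord S x z"
    and "\<forall>U. clopen S U \<longrightarrow> clopen S (downclosure S U)"
    and "\<forall>a. clopen_upset S a \<longrightarrow> (\<forall>x y. rel S a x y \<longrightarrow> x \<in> carrier S \<and> y \<in> carrier S)"
    and "\<forall>a b. clopen_upset S a \<longrightarrow> clopen_upset S b \<longrightarrow> clopen S {x \<in> carrier S. {y. rel S a x y} \<subseteq> b}"
    and "\<forall>a. clopen_upset S a \<longrightarrow> (\<forall>x y. rel S a x y \<longleftrightarrow> (\<exists>x' y'. ord S x x' \<and> rel S a x' y' \<and> ord S y' y))"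
proof -
  have E: "esakia_space S" using assms unfolding cond_esakia_space_def by (rule conjunct1)
  have C: "\<forall>a. clopen_upset S a \<longrightarrow>
        (\<forall>x y. rel S a x y \<longrightarrow> x \<in> carrier S \<and> y \<in> carrier S) \<and>
        (\<forall>b. clopen_upset S b \<longrightarrow> clopen S {x \<in> carrier S. {y. rel S a x y} \<subseteq> b}) \<and>
        (\<forall>x y. rel S a x y \<longleftrightarrow> (\<exists>x' y'. ord S x x' \<and> rel S a x' y' \<and> ord S y' y)) \<and>
        (\<forall>x\<in>carrier S. closedin (topo S) {y. rel S a x y})"
    using assms unfolding cond_esakia_space_def by (rule conjunct2)
  show "\<forall>x y. ord S x y \<longrightarrow> x \<in> carrier S \<and> y \<in> carrier S"
    using E unfolding esakia_space_def by - (elim conjE, assumption)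
  show "\<forall>x\<in>carrier S. ord S x x"
    using E unfolding esakia_space_def by - (elim conjE, assumption)
  show "\<forall>x y z. ord S x y \<longrightarrow> ord S y z \<longrightarrow> ord S x z"
    using E unfolding esakia_space_def by - (elim conjE, assumption)
  show "\<forall>U. clopen S U \<longrightarrow> clopen S (downclosure S U)"
    using E unfolding esakia_space_def by - (elim conjE, assumption)
  show "\<forall>a. clopen_upset S a \<longrightarrow> (\<forall>x y. rel S a x y \<longrightarrow> x \<in> carrier S \<and> y \<in> carrier S)"
    using C by blast
  show "\<forall>a b. clopen_upset S a \<longrightarrow> clopen_upset S b \<longrightarrow> clopen S {x \<in> carrier S. {y. rel S a x y} \<subseteq> b}"
    using C by blast
  show "\<forall>a. clopen_upset S a \<longrightarrow> (\<forall>x y. rel S a x y \<longleftrightarrow> (\<exists>x' y'. ord S x x' \<and> rel S a x' y' \<and> ord S y' y))"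
  proof (rule allI, rule impI)
    fix a assume a: "clopen_upset S a"
    have "clopen_upset S a \<longrightarrow> ((\<forall>x y. rel S a x y \<longrightarrow> x \<in> carrier S \<and> y \<in> carrier S) \<and>
        (\<forall>b. clopen_upset S b \<longrightarrow> clopen S {x \<in> carrier S. {y. rel S a x y} \<subseteq> b}) \<and>
        (\<forall>x y. rel S a x y \<longleftrightarrow> (\<exists>x' y'. ord S x x' \<and> rel S a x' y' \<and> ord S y' y)) \<and>
        (\<forall>x\<in>carrier S. closedin (topo S) {y. rel S a x y}))"
      using C by (rule spec)
    from this a have "(\<forall>x y. rel S a x y \<longrightarrow> x \<in> carrier S \<and> y \<in> carrier S) \<and>
        (\<forall>b. clopen_upset S b \<longrightarrow> clopen S {x \<in> carrier S. {y. rel S a x y} \<subseteq> b}) \<and>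
        (\<forall>x y. rel S a x y \<longleftrightarrow> (\<exists>x' y'. ord S x x' \<and> rel S a x' y' \<and> ord S y' y)) \<and>
        (\<forall>x\<in>carrier S. closedin (topo S) {y. rel S a x y})" by blast
    then show "\<forall>x y. rel S a x y \<longleftrightarrow> (\<exists>x' y'. ord S x x' \<and> rel S a x' y' \<and> ord S y' y)"
      by (elim conjE)
  qed
qed

lemma sem_cu:
  assumes S: "cond_esakia_space S" and V: "\<forall>n. clopen_upset S (V n)"
  shows "clopen_upset S (sem S V \<phi>)"
proof (induction \<phi>)
  case (Var x)
  then show ?case using V by simp
next
  case Bot
  then show ?case by (simp add: clopen_upset_def clopen_def upset_def)
next
  case (Conj \<phi>1 \<phi>2)
  then show ?case by (auto simp add: clopen_upset_def clopen_def upset_def)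
next
  case (Disj \<phi>1 \<phi>2)
  then show ?case by (auto simp add: clopen_upset_def clopen_def upset_def)
next
  case (Imp \<phi>1 \<phi>2)
  let ?A = "sem S V \<phi>1" and ?B = "sem S V \<phi>2"
  have cA: "clopen S ?A" "upset S ?A" and cB: "clopen S ?B" "upset S ?B"
    using Imp by (auto simp: clopen_upset_def)
  have "clopen S (?A - ?B)" using cA cB by (auto simp: clopen_def intro: openin_diff closedin_diff)
  then have D: "clopen S (downclosure S (?A - ?B))" using ces_E(4)[OF S] by blast
  have eq: "sem S V (Imp \<phi>1 \<phi>2) = carrier S - downclosure S (?A - ?B)"
    by (auto simp: downclosure_def)
  have "clopen S (sem S V (Imp \<phi>1 \<phi>2))" unfolding eq using D
    by (auto simp: clopen_def intro: openin_diff closedin_diff)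
  moreover have "upset S (sem S V (Imp \<phi>1 \<phi>2))"
    unfolding upset_def
  proof (intro conjI ballI allI impI)
    show "sem S V (Imp \<phi>1 \<phi>2) \<subseteq> carrier S" by auto
    fix x y assume x: "x \<in> sem S V (Imp \<phi>1 \<phi>2)" and xy: "ord S x y"
    have "y \<in> carrier S" using ces_E(1)[OF S] xy by blast
    moreover have "z \<in> sem S V \<phi>2" if "ord S y z" "z \<in> sem S V \<phi>1" for z
    proof -
      have "ord S x z" using ces_E(3)[OF S] xy that(1) by blast
      then show ?thesis using x that(2) by auto
    qed
    ultimately show "y \<in> sem S V (Imp \<phi>1 \<phi>2)" by auto
  qed
  ultimately show ?case by (simp add: clopen_upset_def)
next
  case (Cond \<phi>1 \<phi>2)
  let ?A = "sem S V \<phi>1" and ?B = "sem S V \<phi>2"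
  have eq: "sem S V (Cond \<phi>1 \<phi>2) = {x \<in> carrier S. {y. rel S ?A x y} \<subseteq> ?B}" by auto
  have "clopen S (sem S V (Cond \<phi>1 \<phi>2))" unfolding eq using ces_E(6)[OF S] Cond by blast
  moreover have "upset S (sem S V (Cond \<phi>1 \<phi>2))"
  proof -
    have "rel S ?A x y" if "ord S x x'" "rel S ?A x' y" for x x' y
    proof -
      have "y \<in> carrier S" using ces_E(5)[OF S] Cond that by blast
      then have "ord S y y" using ces_E(2)[OF S] by blast
      then show ?thesis using ces_E(7)[OF S] Cond that by blast
    qed
    then show ?thesis using ces_E(1)[OF S] unfolding upset_def by auto
  qed
  ultimately show ?case by (simp add: clopen_upset_def)
qed

lemma sem_subst: "sem S V (subst s \<phi>) = sem S (\<lambda>n. sem S V (s n)) \<phi>"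
  by (induction \<phi>) simp_all

lemma sem_sub: "cond_esakia_space S \<Longrightarrow> \<forall>n. clopen_upset S (V n) \<Longrightarrow> sem S V \<phi> \<subseteq> carrier S"
proof -
  assume a: "cond_esakia_space S" "\<forall>n. clopen_upset S (V n)"
  have "clopen_upset S (sem S V \<phi>)" by (rule sem_cu[OF a])
  then show ?thesis unfolding clopen_upset_def upset_def by (elim conjE)
qed

lemma sem_up: "cond_esakia_space S \<Longrightarrow> \<forall>n. clopen_upset S (V n) \<Longrightarrow> x \<in> sem S V \<phi> \<Longrightarrow> ord S x y \<Longrightarrow> y \<in> sem S V \<phi>"
proof -
  assume a: "cond_esakia_space S" "\<forall>n. clopen_upset S (V n)" and b: "x \<in> sem S V \<phi>" "ord S x y"
  have "clopen_upset S (sem S V \<phi>)" by (rule sem_cu[OF a])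
  then have "\<forall>x\<in>sem S V \<phi>. \<forall>y. ord S x y \<longrightarrow> y \<in> sem S V \<phi>" unfolding clopen_upset_def upset_def by (elim conjE)
  then show ?thesis using b by blast
qed

lemma valid_iff_eq:
  assumes S: "cond_esakia_space S" and v: "valid S (Iff p q)" and V: "\<forall>n. clopen_upset S (V n)"
  shows "sem S V p = sem S V q"
proof -
  have vv: "\<forall>x\<in>carrier S. x \<in> sem S V (Iff p q)" using v V unfolding valid_def by blast
  have "x \<in> sem S V p \<longleftrightarrow> x \<in> sem S V q" if "x \<in> carrier S" for x
  proof -
    have r: "ord S x x" using ces_E(2)[OF S] that by blast
    have "x \<in> sem S V (Iff p q)" using vv that by blast
    then show ?thesis using r unfolding Iff_def by (simp; blast)
  qed
  then show ?thesis using sem_sub[OF S V, of p] sem_sub[OF S V, of q] by blast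
qed


lemma ImpI: "x \<in> carrier S \<Longrightarrow> (\<And>y. ord S x y \<Longrightarrow> y \<in> sem S V A \<Longrightarrow> y \<in> sem S V B) \<Longrightarrow> x \<in> sem S V (Imp A B)"
  by simp
lemma ImpE: "x \<in> sem S V (Imp A B) \<Longrightarrow> ord S x y \<Longrightarrow> y \<in> sem S V A \<Longrightarrow> y \<in> sem S V B"
  by simp

locale SV =
  fixes S :: "('a,'b) cspace_scheme" and V :: "nat \<Rightarrow> 'a set"
  assumes S: "cond_esakia_space S" and V: "\<forall>n. clopen_upset S (V n)"
begin
lemma R: "x \<in> carrier S \<Longrightarrow> ord S x x" using ces_E(2)[OF S] by blast
lemma Tr: "ord S x y \<Longrightarrow> ord S y z \<Longrightarrow> ord S x z" using ces_E(3)[OF S] by blast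
lemma C1: "ord S x y \<Longrightarrow> x \<in> carrier S" using ces_E(1)[OF S] by blast
lemma C2: "ord S x y \<Longrightarrow> y \<in> carrier S" using ces_E(1)[OF S] by blast
lemma Up: "x \<in> sem S V \<phi> \<Longrightarrow> ord S x y \<Longrightarrow> y \<in> sem S V \<phi>" using sem_up[OF S V] by blast
lemma Sub: "x \<in> sem S V \<phi> \<Longrightarrow> x \<in> carrier S" using sem_sub[OF S V] by blast

lemma s1: "x \<in> carrier S \<Longrightarrow> x \<in> sem S V (Imp a (Imp b a))"
  using Up Tr C2 by auto
lemma s2: "x \<in> carrier S \<Longrightarrow> x \<in> sem S V (Imp (Imp a (Imp b c)) (Imp (Imp a b) (Imp a c)))"
proof (clarsimp)
  fix y z w
  assume "ord S x y" "\<forall>ya. ord S y ya \<longrightarrow> ya \<in> sem S V a \<longrightarrow> ya \<in> carrier S \<and> (\<forall>yb. ord S ya yb \<longrightarrow> yb \<in> sem S V b \<longrightarrow> yb \<in> sem S V c)"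
    "ord S y z" "\<forall>ya. ord S z ya \<longrightarrow> ya \<in> sem S V a \<longrightarrow> ya \<in> sem S V b" "ord S z w" "w \<in> sem S V a"
  then show "w \<in> sem S V c" using R Tr C2 by meson
qed
lemma s3: "x \<in> carrier S \<Longrightarrow> x \<in> sem S V (Imp (Conj a b) a)" by auto
lemma s4: "x \<in> carrier S \<Longrightarrow> x \<in> sem S V (Imp (Conj a b) b)" by auto
lemma s5: "x \<in> carrier S \<Longrightarrow> x \<in> sem S V (Imp a (Imp b (Conj a b)))" using Up Tr C2 by auto
lemma s6: "x \<in> carrier S \<Longrightarrow> x \<in> sem S V (Imp a (Disj a b))" by auto
lemma s7: "x \<in> carrier S \<Longrightarrow> x \<in> sem S V (Imp b (Disj a b))" by auto
lemma s8: "x \<in> carrier S \<Longrightarrow> x \<in> sem S V (Imp (Imp a c) (Imp (Imp b c) (Imp (Disj a b) c)))"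
proof (rule ImpI)
  fix y assume xy: "ord S x y" and y: "y \<in> sem S V (Imp a c)"
  show "y \<in> sem S V (Imp (Imp b c) (Imp (Disj a b) c))"
  proof (rule ImpI)
    show "y \<in> carrier S" using C2 xy .
    fix z assume yz: "ord S y z" and z: "z \<in> sem S V (Imp b c)"
    show "z \<in> sem S V (Imp (Disj a b) c)"
    proof (rule ImpI)
      show "z \<in> carrier S" using C2 yz .
      fix w assume zw: "ord S z w" and w: "w \<in> sem S V (Disj a b)"
      have yw: "ord S y w" using Tr yz zw .
      show "w \<in> sem S V c"
      proof (cases "w \<in> sem S V a")
        case True then show ?thesis using ImpE[OF y yw] by blast
      next
        case False then have "w \<in> sem S V b" using w by simp
        then show ?thesis using ImpE[OF z zw] by blast
      qed
    qed
  qed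
qed
lemma s9: "x \<in> carrier S \<Longrightarrow> x \<in> sem S V (Imp Bot a)" by auto
lemma scmon: "x \<in> carrier S \<Longrightarrow> x \<in> sem S V (Iff (Cond (Var 0) (Conj (Var 1) (Var 2)))
              (Conj (Cond (Var 0) (Var 1)) (Cond (Var 0) (Var 2))))"
  unfolding Iff_def using C2 by auto
lemma sctop: "x \<in> carrier S \<Longrightarrow> x \<in> sem S V (Iff (Cond (Var 0) Top) Top)"
  unfolding Iff_def Top_def
proof -
  have r: "rel S (V 0) z w \<Longrightarrow> w \<in> carrier S" for z w using ces_E(5)[OF S] V by blast
  show "x \<in> carrier S \<Longrightarrow> x \<in> sem S V (Conj (Imp (Cond (Var 0) (Imp Bot Bot)) (Imp Bot Bot)) (Imp (Imp Bot Bot) (Cond (Var 0) (Imp Bot Bot))))"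
    using C2 r by auto
qed
end

lemma SV_valid: "cond_esakia_space S \<Longrightarrow> (\<And>V x. SV S V \<Longrightarrow> x \<in> carrier S \<Longrightarrow> x \<in> sem S V \<phi>) \<Longrightarrow> valid S \<phi>"
  unfolding valid_def SV_def by blast

lemma soundness:
  assumes "\<phi> \<in> ICK \<Gamma>" and S: "cond_esakia_space S" and G: "\<forall>\<gamma>\<in>\<Gamma>. valid S \<gamma>"
  shows "valid S \<phi>"
  using assms(1)
proof (induction rule: ICK.induct)
  case (usubst a s)
  show ?case unfolding valid_def
  proof (intro allI impI ballI)
    fix V :: "nat \<Rightarrow> _ set" and x assume V: "\<forall>n. clopen_upset S (V n)" and x: "x \<in> carrier S"
    have "\<forall>n. clopen_upset S (sem S V (s n))" using sem_cu[OF S V] by blast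
    then show "x \<in> sem S V (subst s a)" using spec[OF usubst.IH[unfolded valid_def], of "\<lambda>n. sem S V (s n)"] x unfolding sem_subst by blast
  qed
next
  case (mp a b)
  show ?case unfolding valid_def
  proof (intro allI impI ballI)
    fix V :: "nat \<Rightarrow> _ set" and x assume V: "\<forall>n. clopen_upset S (V n)" and x: "x \<in> carrier S"
    have 1: "x \<in> sem S V a" using mp.IH(1) V x unfolding valid_def by blast
    have 2: "x \<in> sem S V (Imp a b)" using mp.IH(2) V x unfolding valid_def by blast
    have "ord S x x" using ces_E(2)[OF S] x by blast
    then show "x \<in> sem S V b" using ImpE[OF 2 _ 1] by blast
  qed
next
  case (congl p q r)
  show ?case unfolding valid_def
  proof (intro allI impI ballI)
    fix V :: "nat \<Rightarrow> _ set" and x assume V: "\<forall>n. clopen_upset S (V n)" and x: "x \<in> carrier S"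
    have "sem S V p = sem S V q" using valid_iff_eq[OF S congl.IH V] .
    then have e: "sem S V (Cond p r) = sem S V (Cond q r)" by simp
    show "x \<in> sem S V (Iff (Cond p r) (Cond q r))" unfolding Iff_def sem.simps(3,5) e using x by auto
  qed
next
  case (congr p q r)
  show ?case unfolding valid_def
  proof (intro allI impI ballI)
    fix V :: "nat \<Rightarrow> _ set" and x assume V: "\<forall>n. clopen_upset S (V n)" and x: "x \<in> carrier S"
    have "sem S V p = sem S V q" using valid_iff_eq[OF S congr.IH V] .
    then have e: "sem S V (Cond r p) = sem S V (Cond r q)" by simp
    show "x \<in> sem S V (Iff (Cond r p) (Cond r q))" unfolding Iff_def sem.simps(3,5) e using x by auto
  qed
next
  case (gamma a)
  then show ?case using G by blast
qed (rule SV_valid[OF S]; (rule SV.s1 SV.s2 SV.s3 SV.s4 SV.s5 SV.s6 SV.s7 SV.s8 SV.s9 SV.scmon SV.sctop; assumption))+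



inductive_set Cn :: "form set \<Rightarrow> form set \<Rightarrow> form set" for G :: "form set" and D :: "form set" where
  ax: "a \<in> ICK G \<Longrightarrow> a \<in> Cn G D"
| hyp: "a \<in> D \<Longrightarrow> a \<in> Cn G D"
| cmp: "a \<in> Cn G D \<Longrightarrow> Imp a b \<in> Cn G D \<Longrightarrow> b \<in> Cn G D"

definition thy :: "form set \<Rightarrow> form set \<Rightarrow> bool" where
  "thy G T \<longleftrightarrow> ICK G \<subseteq> T \<and> (\<forall>a b. a \<in> T \<longrightarrow> Imp a b \<in> T \<longrightarrow> b \<in> T)"

definition pth :: "form set \<Rightarrow> form set \<Rightarrow> bool" where
  "pth G T \<longleftrightarrow> thy G T \<and> Bot \<notin> T \<and> (\<forall>a b. Disj a b \<in> T \<longrightarrow> a \<in> T \<or> b \<in> T)"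

lemma thyI: "ICK G \<subseteq> T \<Longrightarrow> (\<And>a b. a \<in> T \<Longrightarrow> Imp a b \<in> T \<Longrightarrow> b \<in> T) \<Longrightarrow> thy G T"
  unfolding thy_def by blast

lemma thy_ax: "thy G T \<Longrightarrow> a \<in> ICK G \<Longrightarrow> a \<in> T"
  unfolding thy_def by blast

lemma thy_mp: "thy G T \<Longrightarrow> a \<in> T \<Longrightarrow> Imp a b \<in> T \<Longrightarrow> b \<in> T"
  unfolding thy_def by blast

lemma pth_thy: "pth G T \<Longrightarrow> thy G T"
  unfolding pth_def by blast

lemma pth_Bot: "pth G T \<Longrightarrow> Bot \<notin> T"
  unfolding pth_def by blast

lemma pth_Disj: "pth G T \<Longrightarrow> Disj a b \<in> T \<Longrightarrow> a \<in> T \<or> b \<in> T"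
  unfolding pth_def by blast

lemma ICK_thy: "thy G (ICK G)"
  by (rule thyI) (auto intro: ICK.mp)

lemma Cn_thy: "thy G (Cn G D)"
  by (rule thyI) (auto intro: Cn.intros)

lemma Cn_sub: "D \<subseteq> Cn G D"
  by (auto intro: Cn.hyp)

lemma Cn_least: "thy G T \<Longrightarrow> D \<subseteq> T \<Longrightarrow> Cn G D \<subseteq> T"
proof
  fix x assume T: "thy G T" and D: "D \<subseteq> T"
  assume "x \<in> Cn G D"
  then show "x \<in> T"
    by (induction rule: Cn.induct) (use T D in \<open>auto intro: thy_ax thy_mp\<close>)
qed

lemma Cn_thy_eq: "thy G T \<Longrightarrow> Cn G T = T"
  using Cn_least Cn_sub by blast

lemma Cn_empty: "Cn G {} = ICK G"
  using Cn_least[OF ICK_thy, of "{}"] Cn.ax[of _ G "{}"] by blast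

lemma Cn_mono: "D \<subseteq> D' \<Longrightarrow> Cn G D \<subseteq> Cn G D'"
  using Cn_least[OF Cn_thy, of D G D'] Cn_sub[of D' G] by blast

lemma Imp_self: "Imp a a \<in> ICK G"
proof -
  have 1: "Imp (Imp a (Imp (Imp a a) a)) (Imp (Imp a (Imp a a)) (Imp a a)) \<in> ICK G" by (rule ICK.ipc2)
  have 2: "Imp a (Imp (Imp a a) a) \<in> ICK G" by (rule ICK.ipc1)
  have 3: "Imp a (Imp a a) \<in> ICK G" by (rule ICK.ipc1)
  show ?thesis using ICK.mp[OF 3 ICK.mp[OF 2 1]] .
qed

lemma deduction: "b \<in> Cn G (insert a D) \<Longrightarrow> Imp a b \<in> Cn G D"
proof (induction rule: Cn.induct)
  case (ax c)
  then show ?case using Cn.cmp[OF Cn.ax Cn.ax[OF ICK.ipc1[of c a]]] by blast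
next
  case (hyp c)
  then show ?case
  proof
    assume "c = a" then show ?thesis using Cn.ax[OF Imp_self] by blast
  next
    assume "c \<in> D" then show ?thesis using Cn.cmp[OF Cn.hyp Cn.ax[OF ICK.ipc1[of c a]]] by blast
  qed
next
  case (cmp c d)
  have "Imp (Imp a (Imp c d)) (Imp (Imp a c) (Imp a d)) \<in> Cn G D" by (rule Cn.ax, rule ICK.ipc2)
  then show ?case using cmp.IH by (blast intro: Cn.cmp)
qed

lemma deduction_thm: "b \<in> Cn G {a} \<Longrightarrow> Imp a b \<in> ICK G"
  using deduction[of b G a "{}"] Cn_empty by blast

lemma Cn_insert_Imp: "Imp a b \<in> Cn G D \<Longrightarrow> b \<in> Cn G (insert a D)"
proof -
  assume "Imp a b \<in> Cn G D"
  then have "Imp a b \<in> Cn G (insert a D)" using Cn_mono[of D "insert a D" G] by blast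
  then show ?thesis using Cn.cmp[OF Cn.hyp[of a "insert a D"]] by blast
qed

subsection \<open>Theories\<close>

lemma thy_imp_thm: "thy G T \<Longrightarrow> Imp a b \<in> ICK G \<Longrightarrow> a \<in> T \<Longrightarrow> b \<in> T"
  using thy_ax thy_mp by blast

lemma thy_conjI: "thy G T \<Longrightarrow> a \<in> T \<Longrightarrow> b \<in> T \<Longrightarrow> Conj a b \<in> T"
  using thy_imp_thm[OF _ ICK.ipc5] thy_mp by blast

lemma thy_conj: "thy G T \<Longrightarrow> Conj a b \<in> T \<longleftrightarrow> a \<in> T \<and> b \<in> T"
  using thy_conjI thy_imp_thm[OF _ ICK.ipc3] thy_imp_thm[OF _ ICK.ipc4] by blast

lemma thy_disjI1: "thy G T \<Longrightarrow> a \<in> T \<Longrightarrow> Disj a b \<in> T"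
  using thy_imp_thm[OF _ ICK.ipc6] by blast

lemma thy_disjI2: "thy G T \<Longrightarrow> b \<in> T \<Longrightarrow> Disj a b \<in> T"
  using thy_imp_thm[OF _ ICK.ipc7] by blast

lemma pth_disj: "pth G T \<Longrightarrow> Disj a b \<in> T \<longleftrightarrow> a \<in> T \<or> b \<in> T"
  using pth_Disj pth_thy thy_disjI1 thy_disjI2 by blast

lemma Top_ICK: "Top \<in> ICK G"
  unfolding Top_def by (rule ICK.ipc9)

lemma thy_Top: "thy G T \<Longrightarrow> Top \<in> T"
  using thy_ax Top_ICK by blast

lemma Iff_ICK_I: "Imp a b \<in> ICK G \<Longrightarrow> Imp b a \<in> ICK G \<Longrightarrow> Iff a b \<in> ICK G"
  unfolding Iff_def using ICK.mp[OF _ ICK.mp[OF _ ICK.ipc5]] by blast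

lemma Iff_ICK_D1: "Iff a b \<in> ICK G \<Longrightarrow> Imp a b \<in> ICK G"
  unfolding Iff_def using ICK.mp[OF _ ICK.ipc3] by blast

lemma Iff_ICK_D2: "Iff a b \<in> ICK G \<Longrightarrow> Imp b a \<in> ICK G"
  unfolding Iff_def using ICK.mp[OF _ ICK.ipc4] by blast

subsection \<open>Lindenbaum\<close>

lemma lindenbaum:
  assumes T: "thy G T" and psi: "\<psi> \<notin> T"
  shows "\<exists>P. pth G P \<and> T \<subseteq> P \<and> \<psi> \<notin> P"
proof -
  define A where "A = {S. thy G S \<and> T \<subseteq> S \<and> \<psi> \<notin> S}"
  have "A \<noteq> {}" using T psi unfolding A_def by blast
  moreover have "\<Union>C \<in> A" if C: "C \<noteq> {}" "subset.chain A C" for C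
  proof -
    have CA: "C \<subseteq> A" and ch: "\<forall>X\<in>C. \<forall>Y\<in>C. X \<subseteq> Y \<or> Y \<subseteq> X"
      using C(2) unfolding subset_chain_def by blast+
    obtain X0 where X0: "X0 \<in> C" using C(1) by blast
    have "thy G (\<Union>C)"
    proof (rule thyI)
      show "ICK G \<subseteq> \<Union>C" using X0 CA unfolding A_def thy_def by blast
    next
      fix a b assume "a \<in> \<Union>C" "Imp a b \<in> \<Union>C"
      then obtain X Y where XY: "X \<in> C" "Y \<in> C" "a \<in> X" "Imp a b \<in> Y" by blast
      show "b \<in> \<Union>C"
      proof (cases "X \<subseteq> Y")
        case True
        then have "b \<in> Y" using XY CA thy_mp unfolding A_def by blast
        then show ?thesis using XY by blast
      next
        case False
        then have "Y \<subseteq> X" using ch XY by blast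
        then have "b \<in> X" using XY CA thy_mp unfolding A_def by blast
        then show ?thesis using XY by blast
      qed
    qed
    moreover have "T \<subseteq> \<Union>C" using X0 CA unfolding A_def by blast
    moreover have "\<psi> \<notin> \<Union>C" using CA unfolding A_def by blast
    ultimately show ?thesis unfolding A_def by blast
  qed
  ultimately obtain M where M: "M \<in> A" and max: "\<forall>X\<in>A. M \<subseteq> X \<longrightarrow> X = M"
    using subset_Zorn_nonempty[of A] by blast
  have Mt: "thy G M" and TM: "T \<subseteq> M" and pM: "\<psi> \<notin> M" using M unfolding A_def by blast+
  have ext: "Imp a \<psi> \<in> M" if "a \<notin> M" for a
  proof -
    let ?M = "Cn G (insert a M)"
    have "M \<subseteq> ?M" using Cn_sub by blast
    have "\<psi> \<in> ?M"
    proof (rule ccontr)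
      assume "\<psi> \<notin> ?M"
      then have "?M \<in> A" unfolding A_def using Cn_thy TM \<open>M \<subseteq> ?M\<close> by blast
      then have "?M = M" using max \<open>M \<subseteq> ?M\<close> by blast
      moreover have "a \<in> ?M" using Cn_sub by blast
      ultimately show False using that by blast
    qed
    then have "Imp a \<psi> \<in> Cn G M" by (rule deduction)
    then show ?thesis using Cn_thy_eq[OF Mt] by blast
  qed
  have "pth G M"
    unfolding pth_def
  proof (intro conjI allI impI)
    show "thy G M" by (rule Mt)
    show "Bot \<notin> M"
    proof
      assume "Bot \<in> M"
      then have "\<psi> \<in> M" using thy_imp_thm[OF Mt ICK.ipc9] by blast
      then show False using pM by blast
    qed
    fix a b assume d: "Disj a b \<in> M"
    show "a \<in> M \<or> b \<in> M"
    proof (rule ccontr)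
      assume "\<not> (a \<in> M \<or> b \<in> M)"
      then have "Imp a \<psi> \<in> M" "Imp b \<psi> \<in> M" using ext by blast+
      moreover have "Imp (Imp a \<psi>) (Imp (Imp b \<psi>) (Imp (Disj a b) \<psi>)) \<in> M"
        using thy_ax[OF Mt ICK.ipc8] .
      ultimately have "\<psi> \<in> M" using d thy_mp[OF Mt] by meson
      then show False using pM by blast
    qed
  qed
  then show ?thesis using TM pM by blast
qed

lemma imp_witness:
  assumes T: "thy G T" and ab: "Imp a b \<notin> T"
  shows "\<exists>y. pth G y \<and> T \<subseteq> y \<and> a \<in> y \<and> b \<notin> y"
proof -
  have "b \<notin> Cn G (insert a T)"
    using deduction[of b G a T] Cn_thy_eq[OF T] ab by blast
  then obtain y where "pth G y" "Cn G (insert a T) \<subseteq> y" "b \<notin> y"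
    using lindenbaum[OF Cn_thy] by blast
  then show ?thesis using Cn_sub[of "insert a T" G] by blast
qed

subsection \<open>Conditional\<close>

lemma cmon_inst: "Iff (Cond p (Conj a b)) (Conj (Cond p a) (Cond p b)) \<in> ICK G"
proof -
  have "subst (\<lambda>n. if n = 0 then p else if n = 1 then a else b)
     (Iff (Cond (Var 0) (Conj (Var 1) (Var 2))) (Conj (Cond (Var 0) (Var 1)) (Cond (Var 0) (Var 2)))) \<in> ICK G"
    by (rule ICK.usubst, rule ICK.cmon)
  then show ?thesis by (simp add: Iff_def)
qed

lemma ctop_inst: "Iff (Cond p Top) Top \<in> ICK G"
proof -
  have "subst (\<lambda>n. p) (Iff (Cond (Var 0) Top) Top) \<in> ICK G"
    by (rule ICK.usubst, rule ICK.ctop)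
  then show ?thesis by (simp add: Iff_def Top_def)
qed

lemma nec: "a \<in> ICK G \<Longrightarrow> Cond p a \<in> ICK G"
proof -
  assume a: "a \<in> ICK G"
  have 1: "Imp Top a \<in> ICK G" using ICK.mp[OF a ICK.ipc1] .
  have 2: "Imp a Top \<in> ICK G" using ICK.mp[OF Top_ICK ICK.ipc1] .
  have "Iff (Cond p Top) (Cond p a) \<in> ICK G" by (rule ICK.congr, rule Iff_ICK_I[OF 1 2])
  moreover have "Cond p Top \<in> ICK G" using ICK.mp[OF Top_ICK Iff_ICK_D2[OF ctop_inst]] .
  ultimately show ?thesis using ICK.mp Iff_ICK_D1 by blast
qed

lemma imp_conj_thm: "Imp a b \<in> ICK G \<Longrightarrow> Imp a (Conj a b) \<in> ICK G"
proof -
  assume ab: "Imp a b \<in> ICK G"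
  have "a \<in> Cn G {a}" by (rule Cn.hyp) simp
  moreover have "b \<in> Cn G {a}" using Cn.cmp[OF \<open>a \<in> Cn G {a}\<close> Cn.ax[OF ab]] .
  ultimately have "Conj a b \<in> Cn G {a}" using Cn.cmp[OF _ Cn.cmp[OF _ Cn.ax[OF ICK.ipc5]]] by blast
  then show ?thesis by (rule deduction_thm)
qed

lemma cond_mono: "thy G T \<Longrightarrow> Imp a b \<in> ICK G \<Longrightarrow> Cond p a \<in> T \<Longrightarrow> Cond p b \<in> T"
proof -
  assume T: "thy G T" and ab: "Imp a b \<in> ICK G" and pa: "Cond p a \<in> T"
  have "Iff a (Conj a b) \<in> ICK G" by (rule Iff_ICK_I[OF imp_conj_thm[OF ab] ICK.ipc3])
  then have "Iff (Cond p a) (Cond p (Conj a b)) \<in> ICK G" by (rule ICK.congr)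
  then have "Cond p (Conj a b) \<in> T" using thy_imp_thm[OF T Iff_ICK_D1] pa by blast
  then have "Conj (Cond p a) (Cond p b) \<in> T" using thy_imp_thm[OF T Iff_ICK_D1[OF cmon_inst]] by blast
  then show ?thesis using thy_conj[OF T] by blast
qed

lemma cond_K: "thy G T \<Longrightarrow> Cond p a \<in> T \<Longrightarrow> Cond p (Imp a b) \<in> T \<Longrightarrow> Cond p b \<in> T"
proof -
  assume T: "thy G T" and 1: "Cond p a \<in> T" and 2: "Cond p (Imp a b) \<in> T"
  have "Conj (Cond p a) (Cond p (Imp a b)) \<in> T" using thy_conjI[OF T 1 2] .
  then have 3: "Cond p (Conj a (Imp a b)) \<in> T" using thy_imp_thm[OF T Iff_ICK_D2[OF cmon_inst]] by blast
  have "b \<in> Cn G {Conj a (Imp a b)}"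
  proof -
    have c: "Conj a (Imp a b) \<in> Cn G {Conj a (Imp a b)}" by (rule Cn.hyp) simp
    have "a \<in> Cn G {Conj a (Imp a b)}" using Cn.cmp[OF c Cn.ax[OF ICK.ipc3]] .
    moreover have "Imp a b \<in> Cn G {Conj a (Imp a b)}" using Cn.cmp[OF c Cn.ax[OF ICK.ipc4]] .
    ultimately show ?thesis by (rule Cn.cmp)
  qed
  then have "Imp (Conj a (Imp a b)) b \<in> ICK G" by (rule deduction_thm)
  then show ?thesis using cond_mono[OF T _ 3] by blast
qed

lemma cond_cong: "thy G T \<Longrightarrow> Iff p q \<in> ICK G \<Longrightarrow> Cond p a \<in> T \<Longrightarrow> Cond q a \<in> T"
proof -
  assume T: "thy G T" and pq: "Iff p q \<in> ICK G" and pa: "Cond p a \<in> T"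
  have "Iff (Cond p a) (Cond q a) \<in> ICK G" by (rule ICK.congl[OF pq])
  then show ?thesis using thy_imp_thm[OF T Iff_ICK_D1] pa by blast
qed

lemma box_thy: "thy G T \<Longrightarrow> thy G {c. Cond p c \<in> T}"
proof (rule thyI)
  assume T: "thy G T"
  show "ICK G \<subseteq> {c. Cond p c \<in> T}" using nec thy_ax[OF T] by blast
  fix a b assume "a \<in> {c. Cond p c \<in> T}" "Imp a b \<in> {c. Cond p c \<in> T}"
  then show "b \<in> {c. Cond p c \<in> T}" using cond_K[OF T] by blast
qed

lemma box_witness:
  assumes T: "thy G T" and ab: "Cond p b \<notin> T"
  shows "\<exists>y. pth G y \<and> {c. Cond p c \<in> T} \<subseteq> y \<and> b \<notin> y"
  using lindenbaum[OF box_thy[OF T]] ab by blast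

primrec conjL :: "form list \<Rightarrow> form" where
  "conjL [] = Top"
| "conjL (a # l) = Conj a (conjL l)"

primrec disjL :: "form list \<Rightarrow> form" where
  "disjL [] = Bot"
| "disjL (a # l) = Disj a (disjL l)"

lemma thy_conjL: "thy G T \<Longrightarrow> conjL l \<in> T \<longleftrightarrow> set l \<subseteq> T"
  by (induction l) (auto simp: thy_conj thy_Top)

lemma pth_disjL: "pth G T \<Longrightarrow> disjL l \<in> T \<longleftrightarrow> set l \<inter> T \<noteq> {}"
  by (induction l) (auto simp: pth_disj pth_Bot)



definition PT :: "(form \<Rightarrow> bool) topology" where
  "PT = product_topology (\<lambda>_. discrete_topology UNIV) UNIV"

definition emb :: "form set \<Rightarrow> form \<Rightarrow> bool" where
  "emb x = (\<lambda>\<phi>. \<phi> \<in> x)"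

definition KK :: "form set \<Rightarrow> form set set" where
  "KK G = {x. pth G x}"

definition hat :: "form set \<Rightarrow> form \<Rightarrow> form set set" where
  "hat G \<phi> = {x. pth G x \<and> \<phi> \<in> x}"

definition ctop :: "form set \<Rightarrow> form set topology" where
  "ctop G = pullback_topology (KK G) emb PT"

lemma PT_top [simp]: "topspace PT = UNIV"
  unfolding PT_def by simp

lemma PT_open_coord: "openin PT {f. f \<phi> \<in> B}"
proof -
  have "openin PT {f \<in> topspace PT. f \<phi> \<in> B}"
    unfolding PT_def
    by (rule openin_continuous_map_preimage[OF continuous_map_product_projection]) auto
  then show ?thesis by simp
qed

lemma PT_closed_coord: "closedin PT {f. f \<phi> \<in> B}"
proof -
  have "closedin PT {f \<in> topspace PT. f \<phi> \<in> B}"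
    unfolding PT_def
    by (rule closedin_continuous_map_preimage[OF continuous_map_product_projection]) auto
  then show ?thesis by simp
qed

lemma PT_compact: "compact_space PT"
  unfolding PT_def compact_space_product_topology
  by (simp add: compact_space_discrete_topology)

lemma ctop_top [simp]: "topspace (ctop G) = KK G"
  unfolding ctop_def topspace_pullback_topology by simp

lemma ctop_open: "openin (ctop G) U \<longleftrightarrow> (\<exists>W. openin PT W \<and> U = emb -` W \<inter> KK G)"
  unfolding ctop_def openin_pullback_topology by simp

lemma hat_sub: "hat G \<phi> \<subseteq> KK G"
  unfolding hat_def KK_def by blast

lemma hat_open: "openin (ctop G) (hat G \<phi>)"
proof -
  have "hat G \<phi> = emb -` {f. f \<phi> \<in> {True}} \<inter> KK G"
    unfolding hat_def KK_def emb_def by auto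
  then show ?thesis unfolding ctop_open using PT_open_coord by blast
qed

lemma hat_co_open: "openin (ctop G) (KK G - hat G \<phi>)"
proof -
  have "KK G - hat G \<phi> = emb -` {f. f \<phi> \<in> {False}} \<inter> KK G"
    unfolding hat_def KK_def emb_def by auto
  then show ?thesis unfolding ctop_open using PT_open_coord by blast
qed

lemma hat_closed: "closedin (ctop G) (hat G \<phi>)"
  unfolding closedin_def using hat_co_open hat_sub by simp

lemma co_closed: "closedin (ctop G) (KK G - hat G \<phi>)"
proof -
  have "closedin (ctop G) (topspace (ctop G) - hat G \<phi>)"
    by (rule closedin_diff[OF closedin_topspace hat_open])
  then show ?thesis by simp
qed

lemma emb_KK: "emb ` KK G = {f. pth G (Collect f)}"
proof -
  have 1: "emb (Collect f) = f" for f unfolding emb_def by simp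
  have 2: "Collect (emb x) = x" for x unfolding emb_def by simp
  show ?thesis
  proof (rule set_eqI, rule iffI)
    fix f assume "f \<in> emb ` KK G"
    then obtain x where "x \<in> KK G" "f = emb x" by blast
    then show "f \<in> {f. pth G (Collect f)}" using 2 unfolding KK_def by simp
  next
    fix f assume "f \<in> {f. pth G (Collect f)}"
    then have "Collect f \<in> KK G" unfolding KK_def by simp
    then show "f \<in> emb ` KK G" using 1[of f] by (metis image_eqI)
  qed
qed

lemma ball_ex1: "(\<forall>S\<in>{S. \<exists>a. S = g a}. P S) \<longleftrightarrow> (\<forall>a. P (g a))" by blast
lemma ball_ex2: "(\<forall>S\<in>{S. \<exists>a b. S = g a b}. P S) \<longleftrightarrow> (\<forall>a b. P (g a b))" by blast

lemma emb_KK_closed: "closedin PT (emb ` KK G)"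
proof -
  define F1 where "F1 = {S. \<exists>a. S = {f. f a \<in> (if a \<in> ICK G then {True} else UNIV)}}"
  define F2 where "F2 = {S. \<exists>a b. S = {f. f a \<in> {False}} \<union> {f. f (Imp a b) \<in> {False}} \<union> {f. f b \<in> {True}}}"
  define F3 where "F3 = {S. \<exists>a b. S = {f. f (Disj a b) \<in> {False}} \<union> {f. f a \<in> {True}} \<union> {f. f b \<in> {True}}}"
  define F where "F = insert {f. f Bot \<in> {False}} (F1 \<union> F2 \<union> F3)"
  have cl: "closedin PT S" if "S \<in> F" for S
  proof -
    have c3: "closedin PT (A \<union> B \<union> C)" if "A = {f. f a \<in> X}" "B = {f. f b \<in> Y}" "C = {f. f c \<in> Z}"
      for A B C a b c X Y Z using that by (metis closedin_Un PT_closed_coord)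
    from that consider "S = {f. f Bot \<in> {False}}" | "S \<in> F1" | "S \<in> F2" | "S \<in> F3"
      unfolding F_def by blast
    then show ?thesis
    proof cases
      case 1 then show ?thesis by (simp only: PT_closed_coord)
    next
      case 2 obtain a where "S = {f. f a \<in> (if a \<in> ICK G then {True} else UNIV)}"
        using 2 unfolding F1_def mem_Collect_eq by (elim exE) (erule that)
      then show ?thesis by (simp only: PT_closed_coord)
    next
      case 3 obtain a b where "S = {f. f a \<in> {False}} \<union> {f. f (Imp a b) \<in> {False}} \<union> {f. f b \<in> {True}}"
        using 3 unfolding F2_def mem_Collect_eq by (elim exE) (erule that)
      then show ?thesis using c3 by blast
    next
      case 4 obtain a b where "S = {f. f (Disj a b) \<in> {False}} \<union> {f. f a \<in> {True}} \<union> {f. f b \<in> {True}}"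
        using 4 unfolding F3_def mem_Collect_eq by (elim exE) (erule that)
      then show ?thesis using c3 by blast
    qed
  qed
  have "emb ` KK G = \<Inter>F"
  proof -
    have "pth G (Collect f) \<longleftrightarrow> f \<in> \<Inter>F" for f
    proof -
      have "f \<in> \<Inter>F \<longleftrightarrow> \<not> f Bot \<and> (\<forall>a. a \<in> ICK G \<longrightarrow> f a) \<and> (\<forall>a b. f a \<longrightarrow> f (Imp a b) \<longrightarrow> f b)
          \<and> (\<forall>a b. f (Disj a b) \<longrightarrow> f a \<or> f b)"
      proof -
        have "f \<in> \<Inter>F \<longleftrightarrow> f Bot \<in> {False} \<and> (\<forall>S\<in>F1. f \<in> S) \<and> (\<forall>S\<in>F2. f \<in> S) \<and> (\<forall>S\<in>F3. f \<in> S)"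
          unfolding F_def by (simp add: ball_Un)
        also have "\<dots> \<longleftrightarrow> \<not> f Bot \<and> (\<forall>a. a \<in> ICK G \<longrightarrow> f a) \<and> (\<forall>a b. f a \<longrightarrow> f (Imp a b) \<longrightarrow> f b)
          \<and> (\<forall>a b. f (Disj a b) \<longrightarrow> f a \<or> f b)"
          unfolding F1_def F2_def F3_def ball_ex1 ball_ex2 by simp
        finally show ?thesis .
      qed
      then show ?thesis unfolding pth_def thy_def by auto
    qed
    then show ?thesis unfolding emb_KK by blast
  qed
  moreover have "closedin PT (\<Inter>F)" by (rule closedin_Inter) (auto simp: F_def cl)
  ultimately show ?thesis by simp
qed

lemma ctop_compact: "compact_space (ctop G)"
  unfolding compact_space_alt
proof (intro allI impI, elim conjE)
  fix U assume op: "\<forall>B\<in>U. openin (ctop G) B" and cov: "topspace (ctop G) \<subseteq> \<Union>U"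
  obtain W where W: "\<forall>B\<in>U. openin PT (W B) \<and> B = emb -` W B \<inter> KK G"
    using op unfolding ctop_open by metis
  have cK: "compactin PT (emb ` KK G)"
    by (rule closedin_compact_space[OF PT_compact emb_KK_closed])
  have "emb ` KK G \<subseteq> \<Union>(W ` U)"
  proof
    fix f assume "f \<in> emb ` KK G"
    then obtain x where x: "x \<in> KK G" "f = emb x" by blast
    then obtain B where "B \<in> U" "x \<in> B" using cov by auto
    then show "f \<in> \<Union>(W ` U)" using W x by blast
  qed
  moreover have "\<forall>B\<in>W ` U. openin PT B" using W by blast
  ultimately obtain F where F: "finite F" "F \<subseteq> W ` U" "emb ` KK G \<subseteq> \<Union>F"
    using cK unfolding compactin_def by meson
  then obtain U' where U': "U' \<subseteq> U" "finite U'" "F = W ` U'"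
    using finite_subset_image[of F W U] by blast
  have "topspace (ctop G) \<subseteq> \<Union>U'"
  proof
    fix x assume "x \<in> topspace (ctop G)"
    then have x: "x \<in> KK G" by simp
    then obtain B where "B \<in> U'" "emb x \<in> W B" using F U' by blast
    then show "x \<in> \<Union>U'" using W U' x by blast
  qed
  then show "\<exists>F. finite F \<and> F \<subseteq> U \<and> topspace (ctop G) \<subseteq> \<Union>F" using U' by blast
qed

lemma compact_cover:
  assumes X: "compact_space X" and S: "closedin X S" and op: "\<And>i. i \<in> I \<Longrightarrow> openin X (f i)"
    and cov: "S \<subseteq> (\<Union>i\<in>I. f i)"
  shows "\<exists>J. finite J \<and> J \<subseteq> I \<and> S \<subseteq> (\<Union>i\<in>J. f i)"
proof -
  have "compactin X S" by (rule closedin_compact_space[OF X S])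
  moreover have "\<forall>B\<in>f ` I. openin X B" using op by blast
  ultimately obtain F where "finite F" "F \<subseteq> f ` I" "S \<subseteq> \<Union>F"
    using cov unfolding compactin_def by meson
  then show ?thesis using finite_subset_image[of F f I] by (metis)
qed

lemma ctop_basis:
  assumes U: "openin (ctop G) U" and x: "x \<in> U"
  shows "\<exists>A B. A \<in> x \<and> B \<notin> x \<and> hat G A - hat G B \<subseteq> U"
proof -
  obtain W where W: "openin PT W" "U = emb -` W \<inter> KK G" using U unfolding ctop_open by blast
  have xK: "x \<in> KK G" and ex: "emb x \<in> W" using W x by auto
  obtain V where V: "finite {i \<in> UNIV. V i \<noteq> topspace (discrete_topology (UNIV::bool set))}"
    "emb x \<in> Pi\<^sub>E UNIV V" "Pi\<^sub>E UNIV V \<subseteq> W"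
    using W(1) ex unfolding PT_def openin_product_topology_alt by blast
  define F where "F = {i. V i \<noteq> UNIV}"
  have fF: "finite F" using V(1) unfolding F_def by simp
  obtain l1 where l1: "set l1 = F \<inter> x" using finite_list[of "F \<inter> x"] fF by blast
  obtain l2 where l2: "set l2 = F - x" using finite_list[of "F - x"] fF by blast
  have xp: "pth G x" using xK unfolding KK_def by simp
  have "conjL l1 \<in> x" using thy_conjL[OF pth_thy[OF xp]] l1 by blast
  moreover have "disjL l2 \<notin> x" using pth_disjL[OF xp] l2 by blast
  moreover have "hat G (conjL l1) - hat G (disjL l2) \<subseteq> U"
  proof
    fix y assume y: "y \<in> hat G (conjL l1) - hat G (disjL l2)"
    then have yp: "pth G y" unfolding hat_def by blast
    have 1: "F \<inter> x \<subseteq> y" using y thy_conjL[OF pth_thy[OF yp]] l1 unfolding hat_def by blast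
    have 2: "(F - x) \<inter> y = {}" using y pth_disjL[OF yp] l2 yp unfolding hat_def by blast
    have "emb y \<in> Pi\<^sub>E UNIV V"
    proof -
      have "emb y i \<in> V i" for i
      proof (cases "i \<in> F")
        case True
        then have "emb y i = emb x i" using 1 2 unfolding emb_def by blast
        then show ?thesis using V(2) by (auto simp: PiE_def)
      next
        case False
        then show ?thesis unfolding F_def by simp
      qed
      then show ?thesis by (simp add: PiE_UNIV_domain)
    qed
    then show "y \<in> U" using V(3) W(2) yp unfolding KK_def by blast
  qed
  ultimately show ?thesis by blast
qed



definition CS :: "form set \<Rightarrow> form set cspace" where
  "CS G = \<lparr>topo = ctop G, ord = (\<lambda>x y. pth G x \<and> pth G y \<and> x \<subseteq> y),
     rel = (\<lambda>a x y. pth G x \<and> pth G y \<and> (\<forall>\<phi> \<psi>. hat G \<phi> = a \<longrightarrow> Cond \<phi> \<psi> \<in> x \<longrightarrow> \<psi> \<in> y))\<rparr>"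

lemma CS_topo [simp]: "topo (CS G) = ctop G" unfolding CS_def by simp
lemma CS_ord [simp]: "ord (CS G) x y \<longleftrightarrow> pth G x \<and> pth G y \<and> x \<subseteq> y" unfolding CS_def by simp
lemma CS_rel [simp]: "rel (CS G) a x y \<longleftrightarrow> pth G x \<and> pth G y \<and> (\<forall>\<phi> \<psi>. hat G \<phi> = a \<longrightarrow> Cond \<phi> \<psi> \<in> x \<longrightarrow> \<psi> \<in> y)"
  unfolding CS_def by simp

lemma KK_iff [simp]: "x \<in> KK G \<longleftrightarrow> pth G x" unfolding KK_def by simp
lemma hat_iff [simp]: "x \<in> hat G \<phi> \<longleftrightarrow> pth G x \<and> \<phi> \<in> x" unfolding hat_def by simp

lemma hat_le_imp: "hat G \<phi> \<subseteq> hat G \<psi> \<Longrightarrow> Imp \<phi> \<psi> \<in> ICK G"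
proof (rule ccontr)
  assume h: "hat G \<phi> \<subseteq> hat G \<psi>" and n: "Imp \<phi> \<psi> \<notin> ICK G"
  obtain y where "pth G y" "\<phi> \<in> y" "\<psi> \<notin> y" using imp_witness[OF ICK_thy n] by blast
  then show False using h by auto
qed

lemma hat_eq_iff: "hat G \<phi> = hat G \<psi> \<Longrightarrow> Iff \<phi> \<psi> \<in> ICK G"
  using hat_le_imp[of G \<phi> \<psi>] hat_le_imp[of G \<psi> \<phi>] Iff_ICK_I by blast

lemma box_set:
  assumes x: "pth G x"
  shows "(\<forall>y. rel (CS G) (hat G \<phi>) x y \<longrightarrow> y \<in> hat G \<psi>) \<longleftrightarrow> Cond \<phi> \<psi> \<in> x"
proof
  assume "Cond \<phi> \<psi> \<in> x"
  then show "\<forall>y. rel (CS G) (hat G \<phi>) x y \<longrightarrow> y \<in> hat G \<psi>" by auto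
next
  assume a: "\<forall>y. rel (CS G) (hat G \<phi>) x y \<longrightarrow> y \<in> hat G \<psi>"
  show "Cond \<phi> \<psi> \<in> x"
  proof (rule ccontr)
    assume "Cond \<phi> \<psi> \<notin> x"
    then obtain y where y: "pth G y" "{c. Cond \<phi> c \<in> x} \<subseteq> y" "\<psi> \<notin> y"
      using box_witness[OF pth_thy[OF x]] by blast
    have "rel (CS G) (hat G \<phi>) x y"
    proof -
      have "\<psi>' \<in> y" if "hat G \<phi>' = hat G \<phi>" "Cond \<phi>' \<psi>' \<in> x" for \<phi>' \<psi>'
      proof -
        have "Cond \<phi> \<psi>' \<in> x" using cond_cong[OF pth_thy[OF x] hat_eq_iff[OF that(1)] that(2)] .
        then show ?thesis using y(2) by blast
      qed
      then show ?thesis using x y(1) by simp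
    qed
    then show False using a y(3) by auto
  qed
qed

lemma carrier_CS [simp]: "carrier (CS G) = KK G" by simp

lemma truth:
  assumes V: "\<forall>n. V n = hat G (s n)"
  shows "sem (CS G) V \<chi> = hat G (subst s \<chi>)"
proof (induction \<chi>)
  case (Var n)
  then show ?case using V by simp
next
  case Bot
  then show ?case using pth_Bot by auto
next
  case (Conj a b)
  then show ?case using thy_conj[OF pth_thy] by auto
next
  case (Disj a b)
  then show ?case using pth_disj by auto
next
  case (Imp a b)
  show ?case
  proof (rule set_eqI)
    fix x
    show "x \<in> sem (CS G) V (Imp a b) \<longleftrightarrow> x \<in> hat G (subst s (Imp a b))"
    proof
      assume xs: "x \<in> sem (CS G) V (Imp a b)"
      then have xp: "pth G x" by simp
      have "Imp (subst s a) (subst s b) \<in> x"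
      proof (rule ccontr)
        assume "Imp (subst s a) (subst s b) \<notin> x"
        then obtain y where "pth G y" "x \<subseteq> y" "subst s a \<in> y" "subst s b \<notin> y"
          using imp_witness[OF pth_thy[OF xp]] by blast
        moreover have "\<forall>y. ord (CS G) x y \<longrightarrow> y \<in> hat G (subst s a) \<longrightarrow> y \<in> hat G (subst s b)"
          using xs Imp.IH by simp
        ultimately show False using xp by simp
      qed
      then show "x \<in> hat G (subst s (Imp a b))" using xp by simp
    next
      assume xh: "x \<in> hat G (subst s (Imp a b))"
      then have xp: "pth G x" and i: "Imp (subst s a) (subst s b) \<in> x" by simp_all
      have "y \<in> hat G (subst s b)" if "pth G y" "x \<subseteq> y" "y \<in> hat G (subst s a)" for y
      proof -
        have "subst s a \<in> y" using that(3) by simp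
        moreover have "Imp (subst s a) (subst s b) \<in> y" using i that(2) by blast
        ultimately have "subst s b \<in> y" by (rule thy_mp[OF pth_thy[OF that(1)]])
        then show ?thesis using that(1) by simp
      qed
      then show "x \<in> sem (CS G) V (Imp a b)" using xp Imp.IH by simp
    qed
  qed
next
  case (Cond a b)
  show ?case
  proof (rule set_eqI)
    fix x
    have "x \<in> sem (CS G) V (Cond a b) \<longleftrightarrow> pth G x \<and> (\<forall>y. rel (CS G) (hat G (subst s a)) x y \<longrightarrow> y \<in> hat G (subst s b))"
      using Cond by simp
    also have "\<dots> \<longleftrightarrow> x \<in> hat G (subst s (Cond a b))"
      using box_set by auto
    finally show "x \<in> sem (CS G) V (Cond a b) \<longleftrightarrow> x \<in> hat G (subst s (Cond a b))" .
  qed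
qed

lemma clopen_hat: "clopen (CS G) (hat G \<phi>)"
  unfolding clopen_def using hat_open hat_closed by simp

lemma clopen_upset_hat: "clopen_upset (CS G) (hat G \<phi>)"
  unfolding clopen_upset_def upset_def using clopen_hat hat_sub by auto

lemma cu_hat:
  assumes cu: "clopen_upset (CS G) U"
  shows "\<exists>\<phi>. U = hat G \<phi>"
proof -
  have op: "openin (ctop G) U" and cl: "closedin (ctop G) U" and sub: "U \<subseteq> KK G"
    and up: "\<And>x y. x \<in> U \<Longrightarrow> pth G y \<Longrightarrow> x \<subseteq> y \<Longrightarrow> y \<in> U"
    using cu unfolding clopen_upset_def clopen_def upset_def by auto
  have step1: "\<exists>\<psi>. x \<in> hat G \<psi> \<and> hat G \<psi> \<subseteq> U" if x: "x \<in> U" for x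
  proof -
    have xp: "pth G x" using x sub by auto
    have cC: "closedin (ctop G) (KK G - U)"
      using closedin_diff[OF closedin_topspace op] by simp
    have cov: "KK G - U \<subseteq> (\<Union>\<chi>\<in>x. KK G - hat G \<chi>)"
    proof
      fix y assume y: "y \<in> KK G - U"
      then have "\<not> x \<subseteq> y" using up x by auto
      then obtain \<chi> where "\<chi> \<in> x" "\<chi> \<notin> y" by blast
      then show "y \<in> (\<Union>\<chi>\<in>x. KK G - hat G \<chi>)" using y by auto
    qed
    obtain J where J: "finite J" "J \<subseteq> x" "KK G - U \<subseteq> (\<Union>\<chi>\<in>J. KK G - hat G \<chi>)"
      using compact_cover[OF ctop_compact cC hat_co_open cov] by blast
    obtain l where l: "set l = J" using finite_list[OF J(1)] by blast
    have "x \<in> hat G (conjL l)" using thy_conjL[OF pth_thy[OF xp]] l J(2) xp by auto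
    moreover have "hat G (conjL l) \<subseteq> U"
    proof
      fix y assume y: "y \<in> hat G (conjL l)"
      then have yp: "pth G y" and Jy: "J \<subseteq> y" using thy_conjL[OF pth_thy] l by auto
      show "y \<in> U"
      proof (rule ccontr)
        assume "y \<notin> U"
        then have "y \<in> (\<Union>\<chi>\<in>J. KK G - hat G \<chi>)" using J(3) yp by auto
        then show False using Jy yp by auto
      qed
    qed
    ultimately show ?thesis by blast
  qed
  then obtain f where f: "\<And>x. x \<in> U \<Longrightarrow> x \<in> hat G (f x) \<and> hat G (f x) \<subseteq> U" by metis
  have cov2: "U \<subseteq> (\<Union>x\<in>U. hat G (f x))" using f by blast
  obtain J where J: "finite J" "J \<subseteq> U" "U \<subseteq> (\<Union>x\<in>J. hat G (f x))"
    using compact_cover[OF ctop_compact cl hat_open cov2] by blast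
  obtain l where l: "set l = f ` J" using finite_list[of "f ` J"] J(1) by blast
  have "hat G (disjL l) = (\<Union>x\<in>J. hat G (f x))"
  proof (rule set_eqI)
    fix x
    show "x \<in> hat G (disjL l) \<longleftrightarrow> x \<in> (\<Union>x\<in>J. hat G (f x))"
    proof (cases "pth G x")
      case True
      then show ?thesis using pth_disjL[OF True, of l] l by auto
    qed simp
  qed
  also have "\<dots> = U" using J f by blast
  finally show ?thesis by metis
qed

lemma down_cell: "downclosure (CS G) (hat G A - hat G B) = KK G - hat G (Imp A B)"
proof (rule set_eqI)
  fix x
  show "x \<in> downclosure (CS G) (hat G A - hat G B) \<longleftrightarrow> x \<in> KK G - hat G (Imp A B)"
  proof
    assume "x \<in> downclosure (CS G) (hat G A - hat G B)"
    then obtain y where y: "pth G x" "pth G y" "x \<subseteq> y" "A \<in> y" "B \<notin> y"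
      unfolding downclosure_def by auto
    have "Imp A B \<notin> x"
    proof
      assume "Imp A B \<in> x"
      then have "Imp A B \<in> y" using y(3) by blast
      then have "B \<in> y" by (rule thy_mp[OF pth_thy[OF y(2)] y(4)])
      then show False using y(5) by blast
    qed
    then show "x \<in> KK G - hat G (Imp A B)" using y(1) by simp
  next
    assume x: "x \<in> KK G - hat G (Imp A B)"
    then have xp: "pth G x" and "Imp A B \<notin> x" by auto
    then obtain y where "pth G y" "x \<subseteq> y" "A \<in> y" "B \<notin> y"
      using imp_witness[OF pth_thy[OF xp]] by blast
    then show "x \<in> downclosure (CS G) (hat G A - hat G B)"
      unfolding downclosure_def using xp by auto
  qed
qed

lemma clopen_co: "clopen (CS G) (KK G - hat G \<phi>)"
  unfolding clopen_def using hat_co_open co_closed by simp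

lemma down_clopen:
  assumes U: "clopen (CS G) U"
  shows "clopen (CS G) (downclosure (CS G) U)"
proof -
  have op: "openin (ctop G) U" and cl: "closedin (ctop G) U" using U unfolding clopen_def by auto
  obtain A B where AB: "\<And>x. x \<in> U \<Longrightarrow> A x \<in> x \<and> B x \<notin> x \<and> hat G (A x) - hat G (B x) \<subseteq> U"
    using ctop_basis[OF op] by metis
  have sub: "U \<subseteq> KK G" using openin_subset[OF op] by simp
  have opc: "openin (ctop G) (hat G (A x) - hat G (B x))" for x
  proof -
    have "hat G (A x) - hat G (B x) = hat G (A x) \<inter> (KK G - hat G (B x))" using hat_sub by blast
    then show ?thesis using openin_Int[OF hat_open hat_co_open] by simp
  qed
  have cov: "U \<subseteq> (\<Union>x\<in>U. hat G (A x) - hat G (B x))"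
  proof
    fix x assume x: "x \<in> U"
    then have "x \<in> KK G" using sub by blast
    then have "pth G x" by simp
    then have "x \<in> hat G (A x) - hat G (B x)" using AB[OF x] by simp
    then show "x \<in> (\<Union>x\<in>U. hat G (A x) - hat G (B x))" using x by blast
  qed
  obtain J where J: "finite J" "J \<subseteq> U" "U \<subseteq> (\<Union>x\<in>J. hat G (A x) - hat G (B x))"
    using compact_cover[OF ctop_compact cl opc cov] by blast
  have Ueq: "U = (\<Union>x\<in>J. hat G (A x) - hat G (B x))" using J AB by blast
  have "downclosure (CS G) U = (\<Union>x\<in>J. downclosure (CS G) (hat G (A x) - hat G (B x)))"
    unfolding downclosure_def by (subst Ueq) blast
  also have "\<dots> = (\<Union>x\<in>J. KK G - hat G (Imp (A x) (B x)))" using down_cell by simp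
  finally have e: "downclosure (CS G) U = (\<Union>x\<in>J. KK G - hat G (Imp (A x) (B x)))" .
  have "openin (ctop G) (\<Union>x\<in>J. KK G - hat G (Imp (A x) (B x)))"
    using hat_co_open by blast
  moreover have "closedin (ctop G) (\<Union>x\<in>J. KK G - hat G (Imp (A x) (B x)))"
    using co_closed J(1) by (intro closedin_Union) auto
  ultimately show ?thesis unfolding e clopen_def by simp
qed

lemma rel_closed:
  assumes x: "pth G x"
  shows "closedin (ctop G) {y. rel (CS G) a x y}"
proof -
  have "{y. rel (CS G) a x y} = \<Inter>(insert (KK G) {hat G c | c. \<exists>\<phi>. hat G \<phi> = a \<and> Cond \<phi> c \<in> x})"
  proof (rule set_eqI, rule iffI)
    fix y assume "y \<in> {y. rel (CS G) a x y}"
    then show "y \<in> \<Inter>(insert (KK G) {hat G c | c. \<exists>\<phi>. hat G \<phi> = a \<and> Cond \<phi> c \<in> x})"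
      using x by auto
  next
    fix y assume i: "y \<in> \<Inter>(insert (KK G) {hat G c | c. \<exists>\<phi>. hat G \<phi> = a \<and> Cond \<phi> c \<in> x})"
    have yp: "pth G y" using i by simp
    have "\<psi> \<in> y" if "hat G \<phi> = a" "Cond \<phi> \<psi> \<in> x" for \<phi> \<psi>
    proof -
      have "hat G \<psi> \<in> insert (KK G) {hat G c | c. \<exists>\<phi>. hat G \<phi> = a \<and> Cond \<phi> c \<in> x}"
        using that by blast
      then have "y \<in> hat G \<psi>" using i by blast
      then show ?thesis by simp
    qed
    then show "y \<in> {y. rel (CS G) a x y}" using x yp by simp
  qed
  moreover have "closedin (ctop G) (\<Inter>(insert (KK G) {hat G c | c. \<exists>\<phi>. hat G \<phi> = a \<and> Cond \<phi> c \<in> x}))"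
  proof (rule closedin_Inter)
    fix S assume "S \<in> insert (KK G) {hat G c | c. \<exists>\<phi>. hat G \<phi> = a \<and> Cond \<phi> c \<in> x}"
    then show "closedin (ctop G) S" using hat_closed closedin_topspace[of "ctop G"] by auto
  qed simp
  ultimately show ?thesis by simp
qed

lemma CS_ces: "cond_esakia_space (CS G)"
  unfolding cond_esakia_space_def esakia_space_def
proof (intro conjI allI impI ballI)
  show "compact_space (topo (CS G))" using ctop_compact by simp
next
  fix x y assume "ord (CS G) x y" then show "x \<in> carrier (CS G)" by simp
next
  fix x y assume "ord (CS G) x y" then show "y \<in> carrier (CS G)" by simp
next
  fix x assume "x \<in> carrier (CS G)" then show "ord (CS G) x x" by simp
next
  fix x y z assume "ord (CS G) x y" "ord (CS G) y z" then show "ord (CS G) x z" by auto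
next
  fix x y assume "ord (CS G) x y" "ord (CS G) y x" then show "x = y" by auto
next
  fix x y assume "x \<in> carrier (CS G)" "y \<in> carrier (CS G)" "\<not> ord (CS G) x y"
  then obtain \<chi> where "\<chi> \<in> x" "\<chi> \<notin> y" by auto
  then show "\<exists>U. clopen_upset (CS G) U \<and> x \<in> U \<and> y \<notin> U"
    using clopen_upset_hat[of G \<chi>] \<open>x \<in> carrier (CS G)\<close> by auto
next
  fix U assume "clopen (CS G) U" then show "clopen (CS G) (downclosure (CS G) U)" by (rule down_clopen)
next
  fix a x y assume "clopen_upset (CS G) a" "rel (CS G) a x y" then show "x \<in> carrier (CS G)" by simp
next
  fix a x y assume "clopen_upset (CS G) a" "rel (CS G) a x y" then show "y \<in> carrier (CS G)" by simp
next
  fix a b assume a: "clopen_upset (CS G) a" and b: "clopen_upset (CS G) b"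
  obtain \<phi> where \<phi>: "a = hat G \<phi>" using cu_hat[OF a] by blast
  obtain \<psi> where \<psi>: "b = hat G \<psi>" using cu_hat[OF b] by blast
  have "{x \<in> carrier (CS G). {y. rel (CS G) a x y} \<subseteq> b} = hat G (Cond \<phi> \<psi>)"
  proof (rule set_eqI)
    fix x
    show "x \<in> {x \<in> carrier (CS G). {y. rel (CS G) a x y} \<subseteq> b} \<longleftrightarrow> x \<in> hat G (Cond \<phi> \<psi>)"
    proof (cases "pth G x")
      case True
      then show ?thesis using box_set[OF True, of \<phi> \<psi>] unfolding \<phi> \<psi> by auto
    next
      case False
      then show ?thesis by simp
    qed
  qed
  then show "clopen (CS G) {x \<in> carrier (CS G). {y. rel (CS G) a x y} \<subseteq> b}" using clopen_hat by simp
next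
  fix a x y assume "clopen_upset (CS G) a"
  show "rel (CS G) a x y \<longleftrightarrow> (\<exists>x' y'. ord (CS G) x x' \<and> rel (CS G) a x' y' \<and> ord (CS G) y' y)"
  proof
    assume "rel (CS G) a x y"
    then show "\<exists>x' y'. ord (CS G) x x' \<and> rel (CS G) a x' y' \<and> ord (CS G) y' y" by auto
  next
    assume "\<exists>x' y'. ord (CS G) x x' \<and> rel (CS G) a x' y' \<and> ord (CS G) y' y"
    then obtain x' y' where "ord (CS G) x x'" "rel (CS G) a x' y'" "ord (CS G) y' y" by blast
    then show "rel (CS G) a x y" by auto
  qed
next
  fix a x assume "clopen_upset (CS G) a" "x \<in> carrier (CS G)"
  then show "closedin (topo (CS G)) {y. rel (CS G) a x y}" using rel_closed by simp
qed

lemma subst_Var: "subst Var \<phi> = \<phi>"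
  by (induction \<phi>) auto

lemma completeness:
  assumes n: "\<phi> \<notin> ICK G"
  shows "cond_esakia_space (CS G) \<and> (\<forall>\<gamma>\<in>G. valid (CS G) \<gamma>) \<and> \<not> valid (CS G) \<phi>"
proof (intro conjI)
  show "cond_esakia_space (CS G)" by (rule CS_ces)
  show "\<forall>\<gamma>\<in>G. valid (CS G) \<gamma>"
  proof (intro ballI)
    fix \<gamma> assume g: "\<gamma> \<in> G"
    show "valid (CS G) \<gamma>" unfolding valid_def
    proof (intro allI impI ballI)
      fix V :: "nat \<Rightarrow> form set set" and x assume V: "\<forall>n. clopen_upset (CS G) (V n)" and x: "x \<in> carrier (CS G)"
      have "\<forall>n. \<exists>\<phi>. V n = hat G \<phi>" using cu_hat V by blast
      then have "\<exists>s. \<forall>n. V n = hat G (s n)" by (rule choice)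
      then obtain s where s: "\<forall>n. V n = hat G (s n)" by blast
      have "subst s \<gamma> \<in> ICK G" by (rule ICK.usubst, rule ICK.gamma[OF g])
      moreover have xp: "pth G x" using x by simp
      ultimately have "subst s \<gamma> \<in> x" using thy_ax[OF pth_thy[OF xp]] by blast
      then have "x \<in> hat G (subst s \<gamma>)" using xp by simp
      then show "x \<in> sem (CS G) V \<gamma>" using truth[OF s] by simp
    qed
  qed
  show "\<not> valid (CS G) \<phi>"
  proof
    assume v: "valid (CS G) \<phi>"
    obtain x where x: "pth G x" "\<phi> \<notin> x" using lindenbaum[OF ICK_thy n] by blast
    have "\<forall>n. clopen_upset (CS G) (hat G (Var n))" using clopen_upset_hat by blast
    then have "x \<in> sem (CS G) (\<lambda>n. hat G (Var n)) \<phi>" using v x unfolding valid_def by simp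
    then have "x \<in> hat G (subst Var \<phi>)" using truth[of "\<lambda>n. hat G (Var n)" G Var] by simp
    then show False using x subst_Var by simp
  qed
qed


theorem theorem4p24:
  fixes \<Gamma> :: "form set" and \<phi> :: form
  shows "(\<phi> \<in> ICK \<Gamma> \<longrightarrow>
            (\<forall>S :: 'a cspace. cond_esakia_space S \<and> (\<forall>\<gamma>\<in>\<Gamma>. valid S \<gamma>) \<longrightarrow> valid S \<phi>))
       \<and> ((\<forall>S :: form set cspace. cond_esakia_space S \<and> (\<forall>\<gamma>\<in>\<Gamma>. valid S \<gamma>) \<longrightarrow> valid S \<phi>)
            \<longrightarrow> \<phi> \<in> ICK \<Gamma>)"
proof (rule conjI)
  show "\<phi> \<in> ICK \<Gamma> \<longrightarrow>
            (\<forall>S :: 'a cspace. cond_esakia_space S \<and> (\<forall>\<gamma>\<in>\<Gamma>. valid S \<gamma>) \<longrightarrow> valid S \<phi>)"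
  proof (intro impI allI)
    fix S :: "'a cspace"
    assume p: "\<phi> \<in> ICK \<Gamma>" and h: "cond_esakia_space S \<and> (\<forall>\<gamma>\<in>\<Gamma>. valid S \<gamma>)"
    then show "valid S \<phi>" using soundness[OF p] by blast
  qed
  show "(\<forall>S :: form set cspace. cond_esakia_space S \<and> (\<forall>\<gamma>\<in>\<Gamma>. valid S \<gamma>) \<longrightarrow> valid S \<phi>)
            \<longrightarrow> \<phi> \<in> ICK \<Gamma>"
  proof (intro impI)
    assume H: "\<forall>S :: form set cspace. cond_esakia_space S \<and> (\<forall>\<gamma>\<in>\<Gamma>. valid S \<gamma>) \<longrightarrow> valid S \<phi>"
    show "\<phi> \<in> ICK \<Gamma>"
    proof (rule ccontr)
      assume "\<phi> \<notin> ICK \<Gamma>"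
      then have c: "cond_esakia_space (CS \<Gamma>) \<and> (\<forall>\<gamma>\<in>\<Gamma>. valid (CS \<Gamma>) \<gamma>) \<and> \<not> valid (CS \<Gamma>) \<phi>"
        by (rule completeness)
      have "cond_esakia_space (CS \<Gamma>) \<and> (\<forall>\<gamma>\<in>\<Gamma>. valid (CS \<Gamma>) \<gamma>) \<longrightarrow> valid (CS \<Gamma>) \<phi>"
        using H by (rule spec)
      then show False using c by blast
    qed
  qed
qed

end
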